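(* Consider the noisy group testing model in the context with $K>1$ and $p=\frac{1}{(1-u)K}$, and let $\gamma_0=\frac{u}{1-(1-u)p}$. Let $c_0>0$ be any constant. There exist absolute constants $C_{a1},C_{a2}>0$, independent of $N$, $L$ and $K$, such that if $$M\ \ge\ (1+c_0)\,\frac{K(1-u)}{(1-q)(1-\gamma_0)^2}\left(\frac{C_{a1}\log\left[K\binom{N-K}{L-1}\right]}{(N-K)-(L-1)}+C_{a2}\log K\right),$$ then, for a given defective set $S_d$, the algorithm RoLpAl outputs $L$ non-defective items with probability exceeding $1-\exp\left(-c_0\log\left(K\binom{N-K}{L-1}\right)\right)-\exp(-c_0\log K)$.
   Context: Group testing model: $N$ items indexed by $[N]$; a fixed defective set $S_d\subset[N]$ with $|S_d|=K$; $1\le L\le N-K$. Parameters $p\in(0,1)$, $u\in[0,1/2)$, $q\in[0,1/2)$. The test matrix $\mathbf{X}\in\{0,1\}^{M\times N}$ has i.i.d. Bernoulli($p$) entries $X_{lk}$; independently, $D_{lk}\sim\mathrm{Bernoulli}(1-u)$ i.i.d. and $W_l\sim\mathrm{Bernoulli}(q)$ i.i.d.; outcomes $Y_l=\left(\bigvee_{k\in S_d}D_{lk}X_{lk}\right)\vee W_l$ ($\vee$ = boolean OR). Logarithms are natural. Let $Y_z=\{l:Y_l=0\}$, $M_z=|Y_z|$, and $\mathbf{X}(Y_z,:)$ the submatrix of rows of $\mathbf{X}$ indexed by $Y_z$. $\underline{1}_n,\underline{0}_n$ are all-ones/all-zeros vectors and $\preccurlyeq$ is componentwise inequality. LP0: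 minimize $\underline{1}_{M_z}^T\underline{\eta}_z$ over $\underline{z}\in\mathbb{R}^N,\underline{\eta}_z\in\mathbb{R}^{M_z}$ subject to $\mathbf{X}(Y_z,:)(\underline{1}_N-\underline{z})-\underline{\eta}_z=\underline{0}_{M_z}$, $\underline{0}_N\preccurlyeq\underline{z}\preccurlyeq\underline{1}_N$, $\underline{\eta}_z\succcurlyeq\underline{0}_{M_z}$, $\underline{1}_N^T\underline{z}\le L$. Algorithm RoLpAl: solve LP0, obtaining an optimal $\hat{\underline{z}}$; output a set of $L$ items indexed by the $L$ largest entries of $\hat{\underline{z}}$ (ties arbitrary). Success means the output set is disjoint from $S_d$. *)

theory Defs
  imports "HOL-Probability.Probability"
begin

text \<open>Noisy group testing model. Items are 0..<N, tests (rows) are 0..<M.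
  X (l,k) : test matrix entry, D (l,k) : dilution variable, W l : additive noise.\<close>

type_synonym sample = "((nat \<times> nat) \<Rightarrow> bool) \<times> ((nat \<times> nat) \<Rightarrow> bool) \<times> (nat \<Rightarrow> bool)"

definition gt_pmf :: "nat \<Rightarrow> nat \<Rightarrow> real \<Rightarrow> real \<Rightarrow> real \<Rightarrow> sample pmf" where
  "gt_pmf M N p u q =
     pair_pmf (Pi_pmf ({0..<M} \<times> {0..<N}) False (\<lambda>_. bernoulli_pmf p))
      (pair_pmf (Pi_pmf ({0..<M} \<times> {0..<N}) False (\<lambda>_. bernoulli_pmf (1 - u)))
                (Pi_pmf {0..<M} False (\<lambda>_. bernoulli_pmf q)))"

definition outcome :: "nat set \<Rightarrow> sample \<Rightarrow> nat \<Rightarrow> bool" where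
  "outcome Sd \<omega> l = (case \<omega> of (X, D, W) \<Rightarrow> (\<exists>k\<in>Sd. D (l, k) \<and> X (l, k)) \<or> W l)"

definition zero_tests :: "nat \<Rightarrow> nat set \<Rightarrow> sample \<Rightarrow> nat set" where
  "zero_tests M Sd \<omega> = {l \<in> {0..<M}. \<not> outcome Sd \<omega> l}"

definition ind :: "bool \<Rightarrow> real" where "ind b = (if b then 1 else 0)"

definition lp0_feasible ::
  "nat \<Rightarrow> nat \<Rightarrow> ((nat \<times> nat) \<Rightarrow> bool) \<Rightarrow> nat set \<Rightarrow> (nat \<Rightarrow> real) \<Rightarrow> (nat \<Rightarrow> real) \<Rightarrow> bool" where
  "lp0_feasible N L X Yz z eta \<longleftrightarrow>
     (\<forall>l\<in>Yz. (\<Sum>k<N. ind (X (l, k)) * (1 - z k)) - eta l = 0) \<and>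
     (\<forall>k<N. 0 \<le> z k \<and> z k \<le> 1) \<and>
     (\<forall>l\<in>Yz. 0 \<le> eta l) \<and>
     (\<Sum>k<N. z k) \<le> real L"

definition lp0_objective :: "nat set \<Rightarrow> (nat \<Rightarrow> real) \<Rightarrow> real" where
  "lp0_objective Yz eta = (\<Sum>l\<in>Yz. eta l)"

definition lp0_optimal ::
  "nat \<Rightarrow> nat \<Rightarrow> ((nat \<times> nat) \<Rightarrow> bool) \<Rightarrow> nat set \<Rightarrow> (nat \<Rightarrow> real) \<Rightarrow> (nat \<Rightarrow> real) \<Rightarrow> bool" where
  "lp0_optimal N L X Yz z eta \<longleftrightarrow> lp0_feasible N L X Yz z eta \<and>
     (\<forall>z' eta'. lp0_feasible N L X Yz z' eta' \<longrightarrow> lp0_objective Yz eta \<le> lp0_objective Yz eta')"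

definition top_L :: "nat \<Rightarrow> nat \<Rightarrow> (nat \<Rightarrow> real) \<Rightarrow> nat set \<Rightarrow> bool" where
  "top_L N L z T \<longleftrightarrow> T \<subseteq> {0..<N} \<and> card T = L \<and>
     (\<forall>i\<in>T. \<forall>j\<in>{0..<N} - T. z j \<le> z i)"

definition rolpal_success :: "nat \<Rightarrow> nat \<Rightarrow> nat \<Rightarrow> nat set \<Rightarrow> sample \<Rightarrow> bool" where
  "rolpal_success M N L Sd \<omega> \<longleftrightarrow>
     (\<forall>z eta T. lp0_optimal N L (fst \<omega>) (zero_tests M Sd \<omega>) z eta \<longrightarrow> top_L N L z T \<longrightarrow> T \<inter> Sd = {})"

end

theory Submission
  imports Defs
begin

lemma pair_pi:
  assumes "finite A"
  shows "map_pmf (\<lambda>(f,g) i. (f i, g i)) (pair_pmf (Pi_pmf A a P) (Pi_pmf A b Q))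
         = Pi_pmf A (a,b) (\<lambda>i. pair_pmf (P i) (Q i))"
proof (rule pmf_eqI)
  fix h :: "'a \<Rightarrow> 'b \<times> 'c"
  have inj: "inj ((\<lambda>(f,g) i. (f i, g i)) :: ('a \<Rightarrow> 'b) \<times> ('a \<Rightarrow> 'c) \<Rightarrow> _)"
    by (rule injI) (auto simp: fun_eq_iff)
  have h: "h = (\<lambda>(f,g) i. (f i, g i)) (fst \<circ> h, snd \<circ> h)" by (simp add: fun_eq_iff)
  have "pmf (map_pmf (\<lambda>(f,g) i. (f i, g i)) (pair_pmf (Pi_pmf A a P) (Pi_pmf A b Q))) h
      = pmf (pair_pmf (Pi_pmf A a P) (Pi_pmf A b Q)) (fst \<circ> h, snd \<circ> h)"
    by (subst h, subst pmf_map_inj'[OF inj]) simp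
  also have "\<dots> = pmf (Pi_pmf A (a,b) (\<lambda>i. pair_pmf (P i) (Q i))) h"
  proof -
    have e: "pmf (pair_pmf (P x) (Q x)) (h x) = pmf (P x) (fst (h x)) * pmf (Q x) (snd (h x))" for x
      by (cases "h x") (simp add: pmf_pair)
    have c: "(\<forall>x. x \<notin> A \<longrightarrow> fst (h x) = a) \<and> (\<forall>x. x \<notin> A \<longrightarrow> snd (h x) = b)
          \<longleftrightarrow> (\<forall>x. x \<notin> A \<longrightarrow> h x = (a,b))" by (auto simp: prod_eq_iff)
    show ?thesis using assms c by (auto simp: pmf_pair pmf_Pi prod.distrib e)
  qed
  finally show "pmf (map_pmf (\<lambda>(f,g) i. (f i, g i)) (pair_pmf (Pi_pmf A a P) (Pi_pmf A b Q))) h =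
      pmf (Pi_pmf A (a,b) (\<lambda>i. pair_pmf (P i) (Q i))) h" .
qed

lemma curry_pi:
  assumes A: "finite A" and B: "finite B"
  shows "map_pmf (\<lambda>f l k. f (l,k)) (Pi_pmf (A \<times> B) d P)
         = Pi_pmf A (\<lambda>_. d) (\<lambda>l. Pi_pmf B d (\<lambda>k. P (l,k)))"
proof (rule pmf_eqI)
  fix H :: "'a \<Rightarrow> 'b \<Rightarrow> 'c"
  have inj: "inj ((\<lambda>f l k. f (l,k)) :: ('a \<times> 'b \<Rightarrow> 'c) \<Rightarrow> _)"
    by (rule injI) (auto simp: fun_eq_iff)
  have h: "H = (\<lambda>f l k. f (l,k)) (\<lambda>x. H (fst x) (snd x))" by (simp add: fun_eq_iff)
  have "pmf (map_pmf (\<lambda>f l k. f (l,k)) (Pi_pmf (A \<times> B) d P)) H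
      = pmf (Pi_pmf (A \<times> B) d P) (\<lambda>x. H (fst x) (snd x))"
    by (subst h, subst pmf_map_inj'[OF inj]) simp
  also have "\<dots> = pmf (Pi_pmf A (\<lambda>_. d) (\<lambda>l. Pi_pmf B d (\<lambda>k. P (l,k)))) H"
  proof (cases "(\<forall>l. l \<notin> A \<longrightarrow> (\<forall>k. H l k = d)) \<and> (\<forall>l\<in>A. \<forall>k. k \<notin> B \<longrightarrow> H l k = d)")
    case True
    have c1: "\<forall>x. x \<notin> A \<times> B \<longrightarrow> H (fst x) (snd x) = d" using True by auto
    have c2: "\<forall>l. l \<notin> A \<longrightarrow> H l = (\<lambda>_. d)" using True by auto
    have "(\<Prod>x\<in>A \<times> B. pmf (P x) (H (fst x) (snd x))) = (\<Prod>l\<in>A. \<Prod>k\<in>B. pmf (P (l,k)) (H l k))"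
      by (simp add: prod.cartesian_product case_prod_unfold)
    then show ?thesis using True c1 c2 A B by (simp add: pmf_Pi finite_cartesian_product)
  next
    case False
    have c1: "\<not> (\<forall>x. x \<notin> A \<times> B \<longrightarrow> H (fst x) (snd x) = d)" using False by auto
    have L0: "pmf (Pi_pmf (A \<times> B) d P) (\<lambda>x. H (fst x) (snd x)) = 0"
      using A B c1 by (subst pmf_Pi) (simp_all only: finite_cartesian_product if_False)
    show ?thesis
    proof (cases "\<forall>l. l \<notin> A \<longrightarrow> H l = (\<lambda>_. d)")
      case True
      then obtain l k where l: "l \<in> A" "k \<notin> B" "H l k \<noteq> d" using False by (auto simp: fun_eq_iff)
      have "(\<Prod>l\<in>A. pmf (Pi_pmf B d (\<lambda>k. P (l, k))) (H l)) = 0"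
        using l A B by (subst prod_zero_iff) (auto simp: pmf_Pi intro!: bexI[of _ l])
      then show ?thesis using L0 True A B by (simp add: pmf_Pi)
    next
      case False
      then show ?thesis using L0 A B by (auto simp: pmf_Pi)
    qed
  qed
  finally show "pmf (map_pmf (\<lambda>f l k. f (l,k)) (Pi_pmf (A \<times> B) d P)) H =
      pmf (Pi_pmf A (\<lambda>_. d) (\<lambda>l. Pi_pmf B d (\<lambda>k. P (l,k)))) H" .
qed

definition rowmap :: "sample \<Rightarrow> nat \<Rightarrow> ((nat \<Rightarrow> bool \<times> bool) \<times> bool)" where
  "rowmap \<omega> l = (case \<omega> of (X, D, W) \<Rightarrow> ((\<lambda>k. (X (l,k), D (l,k))), W l))"

definition Rpmf :: "nat \<Rightarrow> real \<Rightarrow> real \<Rightarrow> real \<Rightarrow> ((nat \<Rightarrow> bool \<times> bool) \<times> bool) pmf" where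
  "Rpmf N p u q = pair_pmf (Pi_pmf {0..<N} (False,False) (\<lambda>_. pair_pmf (bernoulli_pmf p) (bernoulli_pmf (1-u))))
                           (bernoulli_pmf q)"

lemma rows_pi:
  "map_pmf rowmap (gt_pmf M N p u q) = Pi_pmf {0..<M} ((\<lambda>_. (False,False)), False) (\<lambda>_. Rpmf N p u q)"
proof -
  let ?X = "Pi_pmf ({0..<M} \<times> {0..<N}) False (\<lambda>_. bernoulli_pmf p)"
  let ?D = "Pi_pmf ({0..<M} \<times> {0..<N}) False (\<lambda>_. bernoulli_pmf (1 - u))"
  let ?W = "Pi_pmf {0..<M} False (\<lambda>_. bernoulli_pmf q)"
  let ?C = "Pi_pmf {0..<N} (False,False) (\<lambda>_. pair_pmf (bernoulli_pmf p) (bernoulli_pmf (1-u)))"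
  define pz :: "((nat\<times>nat) \<Rightarrow> bool) \<times> ((nat\<times>nat) \<Rightarrow> bool) \<Rightarrow> (nat\<times>nat) \<Rightarrow> bool \<times> bool"
    where "pz = (\<lambda>(f,g) i. (f i, g i))"
  define cu :: "((nat\<times>nat) \<Rightarrow> bool \<times> bool) \<Rightarrow> nat \<Rightarrow> nat \<Rightarrow> bool \<times> bool"
    where "cu = (\<lambda>f l k. f (l,k))"
  define h4 :: "(nat \<Rightarrow> nat \<Rightarrow> bool \<times> bool) \<times> (nat \<Rightarrow> bool) \<Rightarrow> nat \<Rightarrow> (nat \<Rightarrow> bool \<times> bool) \<times> bool"
    where "h4 = (\<lambda>(f,g) i. (f i, g i))"
  have s1: "pair_pmf (pair_pmf ?X ?D) ?W = map_pmf (\<lambda>(x, (y, z)). ((x, y), z)) (gt_pmf M N p u q)"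
    unfolding gt_pmf_def by (rule pair_pair_pmf)
  have s2: "map_pmf pz (pair_pmf ?X ?D) = Pi_pmf ({0..<M} \<times> {0..<N}) (False,False) (\<lambda>_. pair_pmf (bernoulli_pmf p) (bernoulli_pmf (1-u)))"
    unfolding pz_def by (rule pair_pi) simp
  have s3: "map_pmf cu (Pi_pmf ({0..<M} \<times> {0..<N}) (False,False) (\<lambda>_. pair_pmf (bernoulli_pmf p) (bernoulli_pmf (1-u))))
     = Pi_pmf {0..<M} (\<lambda>_. (False,False)) (\<lambda>_. ?C)"
    unfolding cu_def by (rule curry_pi) simp_all
  have s4: "map_pmf h4 (pair_pmf (Pi_pmf {0..<M} (\<lambda>_. (False,False)) (\<lambda>_. ?C)) ?W)
      = Pi_pmf {0..<M} ((\<lambda>_. (False,False)), False) (\<lambda>_. Rpmf N p u q)"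
    unfolding h4_def Rpmf_def by (rule pair_pi) simp
  have "map_pmf rowmap (gt_pmf M N p u q) =
        map_pmf h4 (map_pmf (\<lambda>(a,b). (cu a, b)) (map_pmf (\<lambda>(a,b). (pz a, b))
          (map_pmf (\<lambda>(x, (y, z)). ((x, y), z)) (gt_pmf M N p u q))))"
  proof -
    have rm: "rowmap = (\<lambda>x i. (\<lambda>k. (fst x (i,k), fst (snd x) (i,k)), snd (snd x) i))"
      by (auto simp: fun_eq_iff rowmap_def split: prod.splits)
    show ?thesis by (simp add: pmf.map_comp o_def case_prod_unfold h4_def cu_def pz_def rm)
  qed
  also have "\<dots> = map_pmf h4 (map_pmf (\<lambda>(a,b). (cu a, b)) (pair_pmf (map_pmf pz (pair_pmf ?X ?D)) ?W))"
    by (simp add: s1[symmetric] map_pair)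
  also have "\<dots> = map_pmf h4 (pair_pmf (Pi_pmf {0..<M} (\<lambda>_. (False,False)) (\<lambda>_. ?C)) ?W)"
    by (simp add: s2 map_pair s3)
  also have "\<dots> = Pi_pmf {0..<M} ((\<lambda>_. (False,False)), False) (\<lambda>_. Rpmf N p u q)" by (rule s4)
  finally show ?thesis .
qed

lemma expectation_pair_prod:
  fixes F :: "'a \<Rightarrow> real" and G :: "'b \<Rightarrow> real"
  assumes "finite (set_pmf A)" "finite (set_pmf B)"
  shows "measure_pmf.expectation (pair_pmf A B) (\<lambda>x. F (fst x) * G (snd x))
       = measure_pmf.expectation A F * measure_pmf.expectation B G"
proof -
  have "measure_pmf.expectation (pair_pmf A B) (\<lambda>x. F (fst x) * G (snd x))
      = (\<Sum>x\<in>set_pmf A \<times> set_pmf B. pmf (pair_pmf A B) x *\<^sub>R (F (fst x) * G (snd x)))"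
    using assms by (intro integral_measure_pmf) auto
  also have "\<dots> = (\<Sum>a\<in>set_pmf A. \<Sum>b\<in>set_pmf B. (pmf A a * F a) * (pmf B b * G b))"
  proof -
    have pp: "pmf (pair_pmf A B) x = pmf A (fst x) * pmf B (snd x)" for x by (cases x) (simp add: pmf_pair)
    show ?thesis by (simp add: sum.cartesian_product pp case_prod_unfold mult_ac)
  qed
  also have "\<dots> = (\<Sum>a\<in>set_pmf A. pmf A a * F a) * (\<Sum>b\<in>set_pmf B. pmf B b * G b)"
    by (simp add: sum_product)
  also have "\<dots> = measure_pmf.expectation A F * measure_pmf.expectation B G"
    using assms by (simp add: integral_measure_pmf[of "set_pmf A"] integral_measure_pmf[of "set_pmf B"])
  finally show ?thesis .
qed

lemma finite_set_Pi_pmf: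
  assumes "finite A" "\<And>x. x \<in> A \<Longrightarrow> finite (set_pmf (P x))"
  shows "finite (set_pmf (Pi_pmf A d P))"
  using assms by (simp add: set_Pi_pmf finite_PiE_dflt)

lemma fin_bern: "finite (set_pmf (bernoulli_pmf p))"
  by (rule finite_subset[of _ UNIV]) auto

lemma fin_R: "finite (set_pmf (Rpmf N p u q))"
  unfolding Rpmf_def by (auto intro!: finite_set_Pi_pmf simp: fin_bern)

lemma fin_gt: "finite (set_pmf (gt_pmf M N p u q))"
  unfolding gt_pmf_def by (auto intro!: finite_set_Pi_pmf finite_cartesian_product simp: fin_bern)

lemma exp_rows:
  fixes h :: "nat \<Rightarrow> ((nat \<Rightarrow> bool \<times> bool) \<times> bool) \<Rightarrow> real"
  assumes "\<And>l r. h l r \<ge> 0"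
  shows "measure_pmf.expectation (gt_pmf M N p u q) (\<lambda>\<omega>. \<Prod>l\<in>{0..<M}. h l (rowmap \<omega> l))
       = (\<Prod>l\<in>{0..<M}. measure_pmf.expectation (Rpmf N p u q) (h l))"
proof -
  have "measure_pmf.expectation (gt_pmf M N p u q) (\<lambda>\<omega>. \<Prod>l\<in>{0..<M}. h l (rowmap \<omega> l))
      = measure_pmf.expectation (map_pmf rowmap (gt_pmf M N p u q)) (\<lambda>y. \<Prod>l\<in>{0..<M}. h l (y l))"
    by simp
  also have "\<dots> = (\<Prod>l\<in>{0..<M}. measure_pmf.expectation (Rpmf N p u q) (h l))"
    unfolding rows_pi
    by (rule expectation_prod_Pi_pmf) (auto intro!: integrable_measure_pmf_finite fin_R assms)
  finally show ?thesis .
qed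

lemma exp_row:
  fixes f :: "nat \<Rightarrow> bool \<times> bool \<Rightarrow> real" and g :: "bool \<Rightarrow> real"
  assumes "\<And>k c. f k c \<ge> 0"
  shows "measure_pmf.expectation (Rpmf N p u q) (\<lambda>r. (\<Prod>k\<in>{0..<N}. f k (fst r k)) * g (snd r))
     = (\<Prod>k\<in>{0..<N}. measure_pmf.expectation (pair_pmf (bernoulli_pmf p) (bernoulli_pmf (1-u))) (f k))
       * measure_pmf.expectation (bernoulli_pmf q) g"
  unfolding Rpmf_def
  apply (subst expectation_pair_prod)
    apply (auto intro!: finite_set_Pi_pmf simp: fin_bern)[2]
  apply (subst expectation_prod_Pi_pmf)
     apply (auto intro!: integrable_measure_pmf_finite simp: fin_bern assms)
  done

lemma exp_col:
  fixes f :: "bool \<times> bool \<Rightarrow> real"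
  assumes "0 \<le> p" "p \<le> 1" "0 \<le> u" "u \<le> 1"
  shows "measure_pmf.expectation (pair_pmf (bernoulli_pmf p) (bernoulli_pmf (1-u))) f
     = p*(1-u)* f (True,True) + p*u * f (True,False) + (1-p)*(1-u)*f (False,True) + (1-p)*u*f (False,False)"
proof -
  have U: "(UNIV :: (bool \<times> bool) set) = {(True,True),(True,False),(False,True),(False,False)}"
    by auto
  have "measure_pmf.expectation (pair_pmf (bernoulli_pmf p) (bernoulli_pmf (1-u))) f
     = (\<Sum>x\<in>UNIV. pmf (pair_pmf (bernoulli_pmf p) (bernoulli_pmf (1-u))) x *\<^sub>R f x)"
    by (intro integral_measure_pmf) auto
  also have "\<dots> = p*(1-u)* f (True,True) + p*u * f (True,False) + (1-p)*(1-u)*f (False,True) + (1-p)*u*f (False,False)"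
    using assms by (simp add: U pmf_pair)
  finally show ?thesis .
qed

lemma exp_bern:
  fixes g :: "bool \<Rightarrow> real"
  assumes "0 \<le> q" "q \<le> 1"
  shows "measure_pmf.expectation (bernoulli_pmf q) g = q * g True + (1-q) * g False"
proof -
  have "measure_pmf.expectation (bernoulli_pmf q) g = (\<Sum>x\<in>UNIV. pmf (bernoulli_pmf q) x *\<^sub>R g x)"
    by (intro integral_measure_pmf) auto
  also have "\<dots> = q * g True + (1-q) * g False"
    using assms by (simp add: UNIV_bool)
  finally show ?thesis .
qed

definition ccount :: "((nat \<times> nat) \<Rightarrow> bool) \<Rightarrow> nat set \<Rightarrow> nat \<Rightarrow> real" where
  "ccount X Yz k = (\<Sum>l\<in>Yz. ind (X (l,k)))"

lemma ind_nonneg: "0 \<le> ind b" by (simp add: ind_def)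

lemma ccount_nonneg: "0 \<le> ccount X Yz k"
  unfolding ccount_def by (intro sum_nonneg) (simp add: ind_def)

lemma lp_obj:
  assumes "lp0_feasible N L X Yz z eta"
  shows "lp0_objective Yz eta = (\<Sum>k<N. ccount X Yz k) - (\<Sum>k<N. ccount X Yz k * z k)"
proof -
  have "lp0_objective Yz eta = (\<Sum>l\<in>Yz. \<Sum>k<N. ind (X (l, k)) * (1 - z k))"
    using assms unfolding lp0_objective_def lp0_feasible_def by (intro sum.cong) auto
  also have "\<dots> = (\<Sum>k<N. \<Sum>l\<in>Yz. ind (X (l, k)) * (1 - z k))" by (rule sum.swap)
  also have "\<dots> = (\<Sum>k<N. ccount X Yz k * (1 - z k))"
    unfolding ccount_def by (simp add: sum_distrib_right)
  also have "\<dots> = (\<Sum>k<N. ccount X Yz k) - (\<Sum>k<N. ccount X Yz k * z k)"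
    by (simp add: algebra_simps sum_subtractf)
  finally show ?thesis .
qed

lemma lp_feas_mk:
  assumes "\<forall>k<N. 0 \<le> z k \<and> z k \<le> 1" "(\<Sum>k<N. z k) \<le> real L"
  shows "lp0_feasible N L X Yz z (\<lambda>l. \<Sum>k<N. ind (X (l, k)) * (1 - z k))"
  using assms unfolding lp0_feasible_def by (auto intro!: sum_nonneg mult_nonneg_nonneg simp: ind_def)

lemma lp_opt_V:
  assumes "lp0_optimal N L X Yz z eta" "\<forall>k<N. 0 \<le> z' k \<and> z' k \<le> 1" "(\<Sum>k<N. z' k) \<le> real L"
  shows "(\<Sum>k<N. ccount X Yz k * z' k) \<le> (\<Sum>k<N. ccount X Yz k * z k)"
proof -
  have f: "lp0_feasible N L X Yz z' (\<lambda>l. \<Sum>k<N. ind (X (l, k)) * (1 - z' k))"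
    using assms(2,3) by (rule lp_feas_mk)
  have f0: "lp0_feasible N L X Yz z eta" using assms(1) unfolding lp0_optimal_def by simp
  have "lp0_objective Yz eta \<le> lp0_objective Yz (\<lambda>l. \<Sum>k<N. ind (X (l, k)) * (1 - z' k))"
    using assms(1) f unfolding lp0_optimal_def by blast
  then show ?thesis using lp_obj[OF f] lp_obj[OF f0] by simp
qed

lemma lp_success:
  assumes Sd: "Sd \<subseteq> {0..<N}"
    and def: "\<forall>d\<in>Sd. ccount X Yz d < \<tau>"
    and G: "real L \<le> real (card {k\<in>{0..<N}. k \<notin> Sd \<and> \<tau> \<le> ccount X Yz k})"
    and opt: "lp0_optimal N L X Yz z eta" and top: "top_L N L z T"
  shows "T \<inter> Sd = {}"
proof -
  define c where "c = ccount X Yz"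
  define G where "G = {k\<in>{0..<N}. k \<notin> Sd \<and> \<tau> \<le> c k}"
  have finG: "finite G" unfolding G_def by auto
  have Gsub: "G \<subseteq> {..<N}" unfolding G_def by auto
  have cardG: "real L \<le> real (card G)" using G unfolding G_def c_def by simp
  have feas: "lp0_feasible N L X Yz z eta" using opt unfolding lp0_optimal_def by simp
  have box: "\<forall>k<N. 0 \<le> z k \<and> z k \<le> 1" and sumz: "(\<Sum>k<N. z k) \<le> real L"
    using feas unfolding lp0_feasible_def by auto
  have V: "(\<Sum>k<N. c k * z' k) \<le> (\<Sum>k<N. c k * z k)"
    if "\<forall>k<N. 0 \<le> z' k \<and> z' k \<le> 1" "(\<Sum>k<N. z' k) \<le> real L" for z'
    using lp_opt_V[OF opt that] unfolding c_def .
  have cG: "c d < c g" if "d \<in> Sd" "g \<in> G" for d g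
    using def that unfolding G_def c_def by force
  have Gd: "d \<notin> G" if "d \<in> Sd" for d using that unfolding G_def by auto
  have z0: "z d = 0" if dS: "d \<in> Sd" for d
  proof (rule ccontr)
    assume "z d \<noteq> 0"
    have dN: "d < N" using dS Sd by auto
    then have zdpos: "z d > 0" using box \<open>z d \<noteq> 0\<close> by force
    have "\<exists>g\<in>G. z g < 1"
    proof (rule ccontr)
      assume "\<not> (\<exists>g\<in>G. z g < 1)"
      then have "\<forall>g\<in>G. z g \<ge> 1" by auto
      then have "(\<Sum>g\<in>G. z g) \<ge> real (card G)"
        using sum_mono[of G "\<lambda>_. 1" z] by simp
      moreover have "(\<Sum>k\<in>insert d G. z k) \<le> (\<Sum>k<N. z k)"
        using Gsub dN box by (intro sum_mono2) auto
      moreover have "(\<Sum>k\<in>insert d G. z k) = z d + (\<Sum>g\<in>G. z g)"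
        using finG Gd[OF dS] by simp
      ultimately show False using sumz cardG zdpos by linarith
    qed
    then obtain g where gG: "g \<in> G" and zg: "z g < 1" by auto
    have gN: "g < N" and gd: "g \<noteq> d" using gG Gsub Gd[OF dS] by auto
    define e where "e = min (z d) (1 - z g)"
    have epos: "e > 0" using zdpos zg unfolding e_def by simp
    define z' where "z' = (\<lambda>k. z k + e * ((if k = g then 1 else 0) - (if k = d then 1 else 0)))"
    have box': "\<forall>k<N. 0 \<le> z' k \<and> z' k \<le> 1"
    proof -
      have "0 \<le> z d" "z d \<le> 1" "0 \<le> z g" "z g \<le> 1" using box gN dN by auto
      then show ?thesis using box gd unfolding z'_def e_def by (auto simp: min_def)
    qed
    have s1: "(\<Sum>k<N. z' k) = (\<Sum>k<N. z k)"
      unfolding z'_def sum.distrib sum_distrib_left[symmetric] sum_subtractf using gN dN by simp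
    have s2: "(\<Sum>k<N. c k * z' k) = (\<Sum>k<N. c k * z k) + e * (c g - c d)"
    proof -
      have "(\<Sum>k<N. c k * z' k) = (\<Sum>k<N. c k * z k + e * ((if k = g then c g else 0) - (if k = d then c d else 0)))"
        unfolding z'_def by (intro sum.cong) (auto simp: algebra_simps)
      also have "\<dots> = (\<Sum>k<N. c k * z k) + e * (c g - c d)"
        unfolding sum.distrib sum_distrib_left[symmetric] sum_subtractf using gN dN by simp
      finally show ?thesis .
    qed
    have "(\<Sum>k<N. c k * z' k) \<le> (\<Sum>k<N. c k * z k)" using V box' s1 sumz by simp
    moreover have "e * (c g - c d) > 0" using epos cG[OF dS gG] by simp
    ultimately show False using s2 by simp
  qed
  show ?thesis
  proof (rule ccontr)
    assume "T \<inter> Sd \<noteq> {}"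
    then obtain d where dT: "d \<in> T" and dS: "d \<in> Sd" by auto
    have TN: "T \<subseteq> {0..<N}" and cT: "card T = L" and tie: "\<forall>i\<in>T. \<forall>j\<in>{0..<N} - T. z j \<le> z i"
      using top unfolding top_L_def by auto
    have finT: "finite T" using TN finite_subset by blast
    have zout: "z j = 0" if "j < N" "j \<notin> T" for j
      using tie dT that z0[OF dS] box by force
    have "(\<Sum>k<N. z k) = (\<Sum>k\<in>T. z k)"
      using TN zout by (intro sum.mono_neutral_right) auto
    also have "\<dots> = (\<Sum>k\<in>T - {d}. z k)"
      using finT dT z0[OF dS] by (simp add: sum_diff1)
    also have "\<dots> \<le> (\<Sum>k\<in>T - {d}. 1)"
      using TN box by (intro sum_mono) auto
    also have "\<dots> = real L - 1"
    proof -
      have "card T > 0" using finT dT card_gt_0_iff by blast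
      then have "L \<ge> 1" using cT by simp
      then show ?thesis using finT dT cT by (simp add: of_nat_diff)
    qed
    finally have sumL: "(\<Sum>k<N. z k) \<le> real L - 1" .
    have "card T > 0" using finT dT card_gt_0_iff by blast
    then have L1: "L \<ge> 1" using cT by simp
    have LG: "L \<le> card G" using cardG by simp
    have "G \<inter> T \<subseteq> T - {d}" using Gd[OF dS] by auto
    then have "card (G \<inter> T) \<le> card (T - {d})" using finT by (intro card_mono) auto
    also have "\<dots> = L - 1" using finT dT cT by simp
    finally have cGT: "card (G \<inter> T) < card G" using L1 LG by linarith
    have "G - T \<noteq> {}"
    proof
      assume "G - T = {}"
      then have "G \<inter> T = G" by auto
      then show False using cGT by simp
    qed
    then obtain g where gG: "g \<in> G" and gT: "g \<notin> T" by auto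
    have gN: "g < N" using gG Gsub by auto
    have zg: "z g = 0" using zout gN gT by simp
    define z' where "z' = (\<lambda>k. if k = g then 1 else z k)"
    have box': "\<forall>k<N. 0 \<le> z' k \<and> z' k \<le> 1" using box unfolding z'_def by auto
    have s1: "(\<Sum>k<N. z' k) = (\<Sum>k<N. z k) + 1"
    proof -
      have "(\<Sum>k<N. z' k) = (\<Sum>k<N. z k + (if k = g then 1 else 0))"
        unfolding z'_def using zg by (intro sum.cong) auto
      then show ?thesis using gN by (simp add: sum.distrib)
    qed
    have s2: "(\<Sum>k<N. c k * z' k) = (\<Sum>k<N. c k * z k) + c g"
    proof -
      have "(\<Sum>k<N. c k * z' k) = (\<Sum>k<N. c k * z k + (if k = g then c g else 0))"
        unfolding z'_def using zg by (intro sum.cong) auto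
      then show ?thesis using gN by (simp add: sum.distrib)
    qed
    have "c g > 0" using cG[OF dS gG] ccount_nonneg[of X Yz d] unfolding c_def by simp
    moreover have "(\<Sum>k<N. c k * z' k) \<le> (\<Sum>k<N. c k * z k)" using V box' s1 sumL by simp
    ultimately show False using s2 by simp
  qed
qed

definition zr :: "nat set \<Rightarrow> ((nat \<Rightarrow> bool \<times> bool) \<times> bool) \<Rightarrow> bool" where
  "zr Sd r \<longleftrightarrow> \<not> snd r \<and> (\<forall>k\<in>Sd. \<not> (fst (fst r k) \<and> snd (fst r k)))"

lemma neg_row: "(\<not> outcome Sd \<omega> l) = zr Sd (rowmap \<omega> l)"
  by (cases \<omega>) (auto simp: outcome_def zr_def rowmap_def)

lemma zt_row: "zero_tests M Sd \<omega> = {l\<in>{0..<M}. zr Sd (rowmap \<omega> l)}"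
  unfolding zero_tests_def using neg_row by blast

lemma X_row: "fst \<omega> (l,k) = fst (fst (rowmap \<omega> l) k)"
  by (cases \<omega>) (auto simp: rowmap_def)

lemma cc_row: "ccount (fst \<omega>) (zero_tests M Sd \<omega>) k
   = (\<Sum>l\<in>{0..<M}. ind (zr Sd (rowmap \<omega> l) \<and> fst (fst (rowmap \<omega> l) k)))"
proof -
  have "ccount (fst \<omega>) (zero_tests M Sd \<omega>) k = (\<Sum>l\<in>{l\<in>{0..<M}. zr Sd (rowmap \<omega> l)}. ind (fst \<omega> (l,k)))"
    unfolding ccount_def zt_row ..
  also have "\<dots> = (\<Sum>l\<in>{0..<M}. if zr Sd (rowmap \<omega> l) then ind (fst \<omega> (l,k)) else 0)"
    by (rule sum.inter_filter) simp
  also have "\<dots> = (\<Sum>l\<in>{0..<M}. ind (zr Sd (rowmap \<omega> l) \<and> fst (fst (rowmap \<omega> l) k)))"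
    by (intro sum.cong) (auto simp: ind_def X_row)
  finally show ?thesis .
qed

lemma mz_row: "real (card (zero_tests M Sd \<omega>)) = (\<Sum>l\<in>{0..<M}. ind (zr Sd (rowmap \<omega> l)))"
proof -
  have "real (card (zero_tests M Sd \<omega>)) = (\<Sum>l\<in>{l\<in>{0..<M}. zr Sd (rowmap \<omega> l)}. 1)"
    unfolding zt_row by simp
  also have "\<dots> = (\<Sum>l\<in>{0..<M}. if zr Sd (rowmap \<omega> l) then 1 else 0)"
    by (rule sum.inter_filter) simp
  also have "\<dots> = (\<Sum>l\<in>{0..<M}. ind (zr Sd (rowmap \<omega> l)))"
    by (simp add: ind_def)
  finally show ?thesis .
qed

lemma markov_gt:
  assumes "\<And>\<omega>. f \<omega> \<ge> 0" "\<And>\<omega>. A \<omega> \<Longrightarrow> f \<omega> \<ge> 1"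
  shows "measure_pmf.prob (gt_pmf M N p u q) {\<omega>. A \<omega>} \<le> measure_pmf.expectation (gt_pmf M N p u q) f"
proof -
  have "measure_pmf.prob (gt_pmf M N p u q) {\<omega>. A \<omega>} =
        measure_pmf.expectation (gt_pmf M N p u q) (indicator {\<omega>. A \<omega>})" by simp
  also have "\<dots> \<le> measure_pmf.expectation (gt_pmf M N p u q) f"
    by (intro integral_mono integrable_measure_pmf_finite fin_gt)
       (use assms in \<open>auto simp: indicator_def\<close>)
  finally show ?thesis .
qed

lemma exp_ind: "exp (t * ind b) = 1 + (exp t - 1) * ind b"
  by (simp add: ind_def)

lemma prod_ifs:
  fixes a b :: real
  assumes "finite A" "Sd \<subseteq> A" "d \<in> Sd"
  shows "(\<Prod>k\<in>A. if k = d then a else if k \<in> Sd then b else 1) = a * b ^ (card Sd - 1)"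
proof -
  have fS: "finite Sd" using assms finite_subset by blast
  have "(\<Prod>k\<in>A. if k = d then a else if k \<in> Sd then b else 1) = (\<Prod>k\<in>Sd. if k = d then a else if k \<in> Sd then b else 1)"
    using assms by (intro prod.mono_neutral_right) auto
  also have "\<dots> = a * (\<Prod>k\<in>Sd - {d}. if k = d then a else if k \<in> Sd then b else 1)"
    using assms fS by (simp add: prod.remove)
  also have "(\<Prod>k\<in>Sd - {d}. if k = d then a else if k \<in> Sd then b else 1) = (\<Prod>k\<in>Sd - {d}. b)"
    by (intro prod.cong) auto
  also have "\<dots> = b ^ (card Sd - 1)" using fS assms by simp
  finally show ?thesis .
qed

lemma prod_ifs2:
  fixes a b :: real
  assumes "finite A" "Sd \<subseteq> A" "S \<subseteq> A" "Sd \<inter> S = {}"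
  shows "(\<Prod>k\<in>A. if k \<in> Sd then a else if k \<in> S then b else 1) = a ^ card Sd * b ^ card S"
proof -
  have fS: "finite Sd" "finite S" using assms finite_subset by blast+
  have "(\<Prod>k\<in>A. if k \<in> Sd then a else if k \<in> S then b else 1) = (\<Prod>k\<in>Sd \<union> S. if k \<in> Sd then a else if k \<in> S then b else 1)"
    using assms by (intro prod.mono_neutral_right) auto
  also have "\<dots> = (\<Prod>k\<in>Sd. if k \<in> Sd then a else if k \<in> S then b else 1) * (\<Prod>k\<in>S. if k \<in> Sd then a else if k \<in> S then b else 1)"
    using fS assms by (intro prod.union_disjoint) auto
  also have "(\<Prod>k\<in>Sd. if k \<in> Sd then a else if k \<in> S then b else 1) = (\<Prod>k\<in>Sd. a)"
    by (intro prod.cong) auto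
  also have "(\<Prod>k\<in>S. if k \<in> Sd then a else if k \<in> S then b else 1) = (\<Prod>k\<in>S. b)"
    using assms by (intro prod.cong) auto
  also have "(\<Prod>k\<in>Sd. a) * (\<Prod>k\<in>S. b) = a ^ card Sd * b ^ card S" by simp
  finally show ?thesis .
qed

lemma prod_ind: "finite A \<Longrightarrow> (\<Prod>k\<in>A. ind (P k)) = ind (\<forall>k\<in>A. P k)"
  by (induction A rule: finite_induct) (auto simp: ind_def)

lemma prod_ifs3:
  fixes F G :: "nat \<Rightarrow> real"
  assumes "finite A" "Sd \<subseteq> A" "S \<subseteq> A" "Sd \<inter> S = {}"
  shows "(\<Prod>k\<in>A. if k \<in> Sd then F k else if k \<in> S then G k else 1) = (\<Prod>k\<in>Sd. F k) * (\<Prod>k\<in>S. G k)"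
proof -
  have fS: "finite Sd" "finite S" using assms finite_subset by blast+
  have "(\<Prod>k\<in>A. if k \<in> Sd then F k else if k \<in> S then G k else 1) = (\<Prod>k\<in>Sd \<union> S. if k \<in> Sd then F k else if k \<in> S then G k else 1)"
    using assms by (intro prod.mono_neutral_right) auto
  also have "\<dots> = (\<Prod>k\<in>Sd. if k \<in> Sd then F k else if k \<in> S then G k else 1) * (\<Prod>k\<in>S. if k \<in> Sd then F k else if k \<in> S then G k else 1)"
    using fS assms by (intro prod.union_disjoint) auto
  also have "(\<Prod>k\<in>Sd. if k \<in> Sd then F k else if k \<in> S then G k else 1) = (\<Prod>k\<in>Sd. F k)"
    by (intro prod.cong) auto
  also have "(\<Prod>k\<in>S. if k \<in> Sd then F k else if k \<in> S then G k else 1) = (\<Prod>k\<in>S. G k)"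
    using assms by (intro prod.cong) auto
  finally show ?thesis .
qed

locale params =
  fixes N :: nat and p u q :: real and Sd :: "nat set"
  assumes p0: "0 \<le> p" and p1: "p \<le> 1" and u0: "0 \<le> u" and u1: "u \<le> 1"
    and q0: "0 \<le> q" and q1: "q \<le> 1" and SdN: "Sd \<subseteq> {0..<N}"
begin

abbreviation "R \<equiv> Rpmf N p u q"
abbreviation "E \<equiv> measure_pmf.expectation R"

lemma intR: "integrable (measure_pmf R) (f :: _ \<Rightarrow> real)"
  by (rule integrable_measure_pmf_finite) (rule fin_R)

lemma row_gen:
  fixes f :: "nat \<Rightarrow> bool \<times> bool \<Rightarrow> real"
  assumes "\<And>k c. f k c \<ge> 0"
  shows "E (\<lambda>r. (\<Prod>k\<in>{0..<N}. f k (fst r k)) * ind (\<not> snd r))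
     = (\<Prod>k\<in>{0..<N}. p*(1-u)* f k (True,True) + p*u * f k (True,False) + (1-p)*(1-u)*f k (False,True) + (1-p)*u*f k (False,False)) * (1 - q)"
  apply (subst exp_row[of f N p u q "\<lambda>w. ind (\<not> w)", OF assms])
  apply (simp only: exp_col[OF p0 p1 u0 u1] exp_bern[OF q0 q1])
  apply (simp add: ind_def)
  done

lemma row_Zd:
  assumes d: "d \<in> Sd"
  shows "E (\<lambda>r. ind (zr Sd r \<and> fst (fst r d))) = p*u*(1-p*(1-u))^(card Sd - 1)*(1-q)"
proof -
  define Q where "Q = (\<lambda>k (c::bool\<times>bool). if k = d then fst c \<and> \<not> snd c else if k \<in> Sd then \<not> (fst c \<and> snd c) else True)"
  have eq: "ind (zr Sd r \<and> fst (fst r d)) = (\<Prod>k\<in>{0..<N}. ind (Q k (fst r k))) * ind (\<not> snd r)" for r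
  proof -
    have "(\<Prod>k\<in>{0..<N}. ind (Q k (fst r k))) = ind (\<forall>k\<in>{0..<N}. Q k (fst r k))" by (simp add: prod_ind)
    moreover have "(\<forall>k\<in>{0..<N}. Q k (fst r k)) \<longleftrightarrow> fst (fst r d) \<and> (\<forall>k\<in>Sd. \<not> (fst (fst r k) \<and> snd (fst r k)))"
      using d SdN unfolding Q_def by (auto split: if_splits)
    ultimately show ?thesis unfolding zr_def by (auto simp: ind_def)
  qed
  have col: "p*(1-u)* ind (Q k (True,True)) + p*u * ind (Q k (True,False)) + (1-p)*(1-u)*ind (Q k (False,True)) + (1-p)*u*ind (Q k (False,False))
      = (if k = d then p*u else if k \<in> Sd then 1 - p*(1-u) else 1)" for k
    unfolding Q_def ind_def by (auto simp: algebra_simps)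
  have "E (\<lambda>r. ind (zr Sd r \<and> fst (fst r d))) = E (\<lambda>r. (\<Prod>k\<in>{0..<N}. ind (Q k (fst r k))) * ind (\<not> snd r))"
    by (simp only: eq)
  also have "\<dots> = (\<Prod>k\<in>{0..<N}. if k = d then p*u else if k \<in> Sd then 1 - p*(1-u) else 1) * (1 - q)"
    using row_gen[of "\<lambda>k c. ind (Q k c)", OF ind_nonneg] by (simp only: col)
  also have "\<dots> = p*u*(1-p*(1-u))^(card Sd - 1)*(1-q)"
    using d SdN by (subst prod_ifs) auto
  finally show ?thesis .
qed

lemma row_ZS:
  assumes S: "S \<subseteq> {0..<N}" "S \<inter> Sd = {}"
  shows "E (\<lambda>r. ind (zr Sd r) * (\<Prod>k\<in>S. exp (-t * ind (fst (fst r k)))))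
     = (1-p*(1-u))^(card Sd) * (1 - p + p * exp (-t)) ^ card S * (1-q)"
proof -
  define f where "f = (\<lambda>k (c::bool\<times>bool). if k \<in> Sd then ind (\<not> (fst c \<and> snd c)) else if k \<in> S then exp (-t * ind (fst c)) else 1)"
  have fS: "finite Sd" using SdN finite_subset by blast
  have eq: "ind (zr Sd r) * (\<Prod>k\<in>S. exp (-t * ind (fst (fst r k)))) = (\<Prod>k\<in>{0..<N}. f k (fst r k)) * ind (\<not> snd r)" for r
  proof -
    have "(\<Prod>k\<in>{0..<N}. f k (fst r k)) = (\<Prod>k\<in>Sd. ind (\<not> (fst (fst r k) \<and> snd (fst r k)))) * (\<Prod>k\<in>S. exp (-t * ind (fst (fst r k))))"
      unfolding f_def using SdN S by (subst prod_ifs3) auto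
    also have "(\<Prod>k\<in>Sd. ind (\<not> (fst (fst r k) \<and> snd (fst r k)))) = ind (\<forall>k\<in>Sd. \<not> (fst (fst r k) \<and> snd (fst r k)))"
      using fS by (simp add: prod_ind)
    finally show ?thesis unfolding zr_def by (auto simp: ind_def)
  qed
  have col: "p*(1-u)* f k (True,True) + p*u * f k (True,False) + (1-p)*(1-u)*f k (False,True) + (1-p)*u*f k (False,False)
      = (if k \<in> Sd then 1 - p*(1-u) else if k \<in> S then 1 - p + p * exp (-t) else 1)" for k
    unfolding f_def ind_def by (auto simp: algebra_simps)
  have "E (\<lambda>r. ind (zr Sd r) * (\<Prod>k\<in>S. exp (-t * ind (fst (fst r k))))) = E (\<lambda>r. (\<Prod>k\<in>{0..<N}. f k (fst r k)) * ind (\<not> snd r))"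
    by (simp only: eq)
  also have "\<dots> = (\<Prod>k\<in>{0..<N}. if k \<in> Sd then 1 - p*(1-u) else if k \<in> S then 1 - p + p * exp (-t) else 1) * (1 - q)"
    using row_gen[of f] by (simp only: col) (auto simp: f_def ind_def)
  also have "\<dots> = (1-p*(1-u))^(card Sd) * (1 - p + p * exp (-t)) ^ card S * (1-q)"
    using SdN S by (subst prod_ifs2) auto
  finally show ?thesis .
qed

lemma row_Z: "E (\<lambda>r. ind (zr Sd r)) = (1-p*(1-u))^(card Sd) * (1-q)"
  using row_ZS[of "{}" 0] by simp

end

context params begin

lemma E_affine: fixes a c :: real shows "E (\<lambda>r. a + c * g r) = a + c * E g"
  by (simp add: intR)

lemma E_gt_cmult: fixes a :: real shows "measure_pmf.expectation (gt_pmf M N p u q) (\<lambda>\<omega>. a * g \<omega>) = a * measure_pmf.expectation (gt_pmf M N p u q) g"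
  by simp

lemma bnd1:
  assumes d: "d \<in> Sd" and t: "t \<ge> 0"
  shows "measure_pmf.prob (gt_pmf M N p u q) {\<omega>. \<tau> \<le> ccount (fst \<omega>) (zero_tests M Sd \<omega>) d}
     \<le> exp (-t*\<tau>) * (1 + (exp t - 1)*(p*u*(1-p*(1-u))^(card Sd - 1)*(1-q))) ^ M"
proof -
  let ?P = "gt_pmf M N p u q"
  define h where "h = (\<lambda>r. exp (t * ind (zr Sd r \<and> fst (fst r d))))"
  have pw: "exp (t * (ccount (fst \<omega>) (zero_tests M Sd \<omega>) d - \<tau>)) = exp (-t*\<tau>) * (\<Prod>l\<in>{0..<M}. h (rowmap \<omega> l))" for \<omega>
  proof -
    have "t * (ccount (fst \<omega>) (zero_tests M Sd \<omega>) d - \<tau>) = -t*\<tau> + (\<Sum>l\<in>{0..<M}. t * ind (zr Sd (rowmap \<omega> l) \<and> fst (fst (rowmap \<omega> l) d)))"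
      by (subst cc_row) (simp add: sum_distrib_left algebra_simps)
    then have "exp (t * (ccount (fst \<omega>) (zero_tests M Sd \<omega>) d - \<tau>)) = exp (-t*\<tau>) * exp (\<Sum>l\<in>{0..<M}. t * ind (zr Sd (rowmap \<omega> l) \<and> fst (fst (rowmap \<omega> l) d)))"
      by (simp only: exp_add)
    then show ?thesis unfolding h_def by (simp only: exp_sum[OF finite_atLeastLessThan])
  qed
  have "measure_pmf.prob ?P {\<omega>. \<tau> \<le> ccount (fst \<omega>) (zero_tests M Sd \<omega>) d}
      \<le> measure_pmf.expectation ?P (\<lambda>\<omega>. exp (t * (ccount (fst \<omega>) (zero_tests M Sd \<omega>) d - \<tau>)))"
    by (rule markov_gt) (use t in auto)
  also have "\<dots> = exp (-t*\<tau>) * measure_pmf.expectation ?P (\<lambda>\<omega>. \<Prod>l\<in>{0..<M}. h (rowmap \<omega> l))"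
    by (simp only: pw E_gt_cmult)
  also have "measure_pmf.expectation ?P (\<lambda>\<omega>. \<Prod>l\<in>{0..<M}. h (rowmap \<omega> l)) = (\<Prod>l\<in>{0..<M}. E h)"
    by (rule exp_rows) (simp add: h_def)
  also have "E h = 1 + (exp t - 1)*(p*u*(1-p*(1-u))^(card Sd - 1)*(1-q))"
    unfolding h_def exp_ind E_affine row_Zd[OF d] ..
  finally show ?thesis by simp
qed

lemma bnd2:
  assumes t: "t \<ge> 0"
  shows "measure_pmf.prob (gt_pmf M N p u q) {\<omega>. real (card (zero_tests M Sd \<omega>)) < z0}
     \<le> exp (t*z0) * (1 + (exp (-t) - 1)*((1-p*(1-u))^(card Sd)*(1-q))) ^ M"
proof -
  let ?P = "gt_pmf M N p u q"
  define h where "h = (\<lambda>r. exp ((-t) * ind (zr Sd r)))"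
  have pw: "exp (t * (z0 - real (card (zero_tests M Sd \<omega>)))) = exp (t*z0) * (\<Prod>l\<in>{0..<M}. h (rowmap \<omega> l))" for \<omega>
  proof -
    have "t * (z0 - real (card (zero_tests M Sd \<omega>))) = t*z0 + (\<Sum>l\<in>{0..<M}. (-t) * ind (zr Sd (rowmap \<omega> l)))"
      by (subst mz_row) (simp add: sum_distrib_left sum_negf algebra_simps)
    then have "exp (t * (z0 - real (card (zero_tests M Sd \<omega>)))) = exp (t*z0) * exp (\<Sum>l\<in>{0..<M}. (-t) * ind (zr Sd (rowmap \<omega> l)))"
      by (simp only: exp_add)
    then show ?thesis unfolding h_def by (simp only: exp_sum[OF finite_atLeastLessThan])
  qed
  have "measure_pmf.prob ?P {\<omega>. real (card (zero_tests M Sd \<omega>)) < z0}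
      \<le> measure_pmf.expectation ?P (\<lambda>\<omega>. exp (t * (z0 - real (card (zero_tests M Sd \<omega>)))))"
    by (rule markov_gt) (use t in auto)
  also have "\<dots> = exp (t*z0) * measure_pmf.expectation ?P (\<lambda>\<omega>. \<Prod>l\<in>{0..<M}. h (rowmap \<omega> l))"
    by (simp only: pw E_gt_cmult)
  also have "measure_pmf.expectation ?P (\<lambda>\<omega>. \<Prod>l\<in>{0..<M}. h (rowmap \<omega> l)) = (\<Prod>l\<in>{0..<M}. E h)"
    by (rule exp_rows) (simp add: h_def)
  also have "E h = 1 + (exp (-t) - 1)*((1-p*(1-u))^(card Sd)*(1-q))"
    unfolding h_def exp_ind E_affine row_Z ..
  finally show ?thesis by simp
qed

lemma bnd3:
  assumes S: "S \<subseteq> {0..<N}" "S \<inter> Sd = {}" and t: "t \<ge> 0"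
  shows "measure_pmf.prob (gt_pmf M N p u q)
      {\<omega>. z0 \<le> real (card (zero_tests M Sd \<omega>)) \<and> (\<forall>k\<in>S. ccount (fst \<omega>) (zero_tests M Sd \<omega>) k < \<tau>)}
     \<le> exp (real (card S) * (t*\<tau> + z0 * ln (1 - p + p * exp (-t))))"
proof -
  let ?P = "gt_pmf M N p u q"
  define \<beta> where "\<beta> = 1 - p + p * exp (-t)"
  have bpos: "\<beta> > 0"
  proof -
    have "p * exp (-t) \<le> p * 1" using p0 t by (intro mult_left_mono) auto
    moreover have "p * exp (-t) \<ge> 0" using p0 by simp
    ultimately show ?thesis unfolding \<beta>_def using p1 by (cases "p = 1") (auto)
  qed
  have ble: "\<beta> \<le> 1" unfolding \<beta>_def using p0 t by (simp add: mult_left_le)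
  define n where "n = card S"
  define rr where "rr = - real n * ln \<beta>"
  have rr0: "rr \<ge> 0" unfolding rr_def using bpos ble by (simp add: mult_nonneg_nonpos)
  have errb: "exp rr * \<beta> ^ n = 1"
  proof -
    have "\<beta> ^ n = exp (real n * ln \<beta>)" using bpos by (simp add: exp_of_nat_mult)
    then show ?thesis unfolding rr_def by (simp add: exp_add[symmetric])
  qed
  have finS: "finite S" using S finite_subset by blast
  define cc where "cc = (\<lambda>\<omega> k. ccount (fst \<omega>) (zero_tests M Sd \<omega>) k)"
  define Mz where "Mz = (\<lambda>\<omega>. real (card (zero_tests M Sd \<omega>)))"
  define h where "h = (\<lambda>r. exp (rr * ind (zr Sd r) - t * (\<Sum>k\<in>S. ind (zr Sd r \<and> fst (fst r k)))))"
  define f where "f = (\<lambda>\<omega>. exp (rr * (Mz \<omega> - z0) + t * (real n * \<tau> - (\<Sum>k\<in>S. cc \<omega> k))))"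
  have pw: "f \<omega> = exp (t * real n * \<tau> - rr * z0) * (\<Prod>l\<in>{0..<M}. h (rowmap \<omega> l))" for \<omega>
  proof -
    have "rr * (Mz \<omega> - z0) + t * (real n * \<tau> - (\<Sum>k\<in>S. cc \<omega> k))
        = (t * real n * \<tau> - rr * z0) + (\<Sum>l\<in>{0..<M}. rr * ind (zr Sd (rowmap \<omega> l)) - t * (\<Sum>k\<in>S. ind (zr Sd (rowmap \<omega> l) \<and> fst (fst (rowmap \<omega> l) k))))"
      unfolding Mz_def cc_def
      apply (simp only: mz_row cc_row)
      apply (simp add: sum_distrib_left algebra_simps sum_subtractf sum.swap[of _ S] sum_negf)
      done
    then have "f \<omega> = exp (t * real n * \<tau> - rr * z0) * exp (\<Sum>l\<in>{0..<M}. rr * ind (zr Sd (rowmap \<omega> l)) - t * (\<Sum>k\<in>S. ind (zr Sd (rowmap \<omega> l) \<and> fst (fst (rowmap \<omega> l) k))))"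
      unfolding f_def by (simp only: exp_add)
    then show ?thesis unfolding h_def by (simp only: exp_sum[OF finite_atLeastLessThan])
  qed
  have Eh: "E h = 1"
  proof -
    have hp: "h r = 1 + (-1) * ind (zr Sd r) + exp rr * (ind (zr Sd r) * (\<Prod>k\<in>S. exp (-t * ind (fst (fst r k)))))" for r
    proof (cases "zr Sd r")
      case True
      have "rr * ind (zr Sd r) - t * (\<Sum>k\<in>S. ind (zr Sd r \<and> fst (fst r k))) = rr + (\<Sum>k\<in>S. -t * ind (fst (fst r k)))"
        using True by (simp add: ind_def sum_distrib_left sum_negf)
      then have "h r = exp rr * exp (\<Sum>k\<in>S. -t * ind (fst (fst r k)))"
        unfolding h_def by (simp only: exp_add)
      then show ?thesis using True finS by (simp add: exp_sum ind_def)
    next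
      case False
      then show ?thesis unfolding h_def by (simp add: ind_def)
    qed
    have "E h = E (\<lambda>r. 1 + (-1) * ind (zr Sd r) + exp rr * (ind (zr Sd r) * (\<Prod>k\<in>S. exp (-t * ind (fst (fst r k))))))"
      by (subst (1) fun_eq_iff[THEN iffD2, OF allI, OF hp]) (rule refl)
    also have "\<dots> = 1 + (-1) * E (\<lambda>r. ind (zr Sd r)) + exp rr * E (\<lambda>r. ind (zr Sd r) * (\<Prod>k\<in>S. exp (-t * ind (fst (fst r k)))))"
      by (simp add: intR)
    also have "\<dots> = 1"
    proof -
      have e2: "exp rr * ((1-p*(1-u))^(card Sd) * \<beta> ^ n * (1-q)) = (1-p*(1-u))^(card Sd) * (1-q)"
      proof -
        have "exp rr * ((1-p*(1-u))^(card Sd) * \<beta> ^ n * (1-q)) = (exp rr * \<beta> ^ n) * ((1-p*(1-u))^(card Sd) * (1-q))"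
          by (simp only: mult_ac)
        then show ?thesis using errb by simp
      qed
      show ?thesis unfolding row_Z row_ZS[OF S] n_def[symmetric] \<beta>_def[symmetric] e2 by simp
    qed
    finally show ?thesis .
  qed
  have "measure_pmf.prob ?P {\<omega>. z0 \<le> real (card (zero_tests M Sd \<omega>)) \<and> (\<forall>k\<in>S. ccount (fst \<omega>) (zero_tests M Sd \<omega>) k < \<tau>)}
      \<le> measure_pmf.expectation ?P f"
  proof (rule markov_gt)
    fix \<omega> show "0 \<le> f \<omega>" unfolding f_def by simp
  next
    fix \<omega> assume A: "z0 \<le> real (card (zero_tests M Sd \<omega>)) \<and> (\<forall>k\<in>S. ccount (fst \<omega>) (zero_tests M Sd \<omega>) k < \<tau>)"
    have "0 \<le> rr * (Mz \<omega> - z0)" using A rr0 unfolding Mz_def by simp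
    moreover have "(\<Sum>k\<in>S. cc \<omega> k) \<le> (\<Sum>k\<in>S. \<tau>)" using A unfolding cc_def by (intro sum_mono) auto
    then have "0 \<le> t * (real n * \<tau> - (\<Sum>k\<in>S. cc \<omega> k))" using t unfolding n_def by simp
    ultimately show "1 \<le> f \<omega>" unfolding f_def by simp
  qed
  also have "\<dots> = exp (t * real n * \<tau> - rr * z0) * measure_pmf.expectation ?P (\<lambda>\<omega>. \<Prod>l\<in>{0..<M}. h (rowmap \<omega> l))"
  proof -
    have "f = (\<lambda>\<omega>. exp (t * real n * \<tau> - rr * z0) * (\<Prod>l\<in>{0..<M}. h (rowmap \<omega> l)))"
      using pw by (rule ext)
    then show ?thesis by (simp only: E_gt_cmult)
  qed
  also have "measure_pmf.expectation ?P (\<lambda>\<omega>. \<Prod>l\<in>{0..<M}. h (rowmap \<omega> l)) = (\<Prod>l\<in>{0..<M}. E h)"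
    by (rule exp_rows) (simp add: h_def)
  also have "exp (t * real n * \<tau> - rr * z0) = exp (real (card S) * (t*\<tau> + z0 * ln (1 - p + p * exp (-t))))"
    unfolding rr_def n_def \<beta>_def by (simp add: algebra_simps)
  finally show ?thesis using Eh by simp
qed

end

lemma exp_neg_bound:
  fixes t :: real assumes "t \<ge> 0" shows "exp (-t) \<le> 1 - t + t^2"
proof -
  have "1 - t + t^2 = (t - 1/2)^2 + 3/4" by (simp add: power2_eq_square algebra_simps)
  moreover have "(t - 1/2)^2 \<ge> 0" by simp
  ultimately have pos: "1 - t + t^2 > 0" by linarith
  have "1 \<le> (1 + t) * (1 - t + t^2)" using assms by (simp add: algebra_simps power2_eq_square power3_eq_cube)
  also have "\<dots> \<le> exp t * (1 - t + t^2)" using pos exp_ge_add_one_self[of t] by (intro mult_right_mono) auto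
  finally have "1 \<le> exp t * (1 - t + t^2)" .
  then show ?thesis by (simp add: exp_minus field_simps)
qed

lemma kappa_bound:
  fixes K :: nat assumes "K \<ge> 2" shows "(1 - 1 / real K) ^ K \<ge> exp (-2)"
proof -
  have x: "0 \<le> 1 / real K" "1 / real K \<le> 1/2" using assms by (auto simp: field_simps)
  have l: "- (1/real K) - 2 * (1/real K)^2 \<le> ln (1 - 1/real K)" by (rule ln_one_minus_pos_lower_bound[OF x])
  have pos: "1 - 1 / real K > 0" using x by simp
  have "real K * (- (1/real K) - 2 * (1/real K)^2) = -1 - 2 / real K"
    using assms by (simp add: field_simps power2_eq_square)
  moreover have "-1 - 2 / real K \<ge> -2" using x by simp
  ultimately have "real K * ln (1 - 1/real K) \<ge> -2"
    using mult_left_mono[OF l, of "real K"] by simp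
  then have "exp (-2) \<le> exp (real K * ln (1 - 1/real K))" by simp
  also have "\<dots> = (1 - 1 / real K) ^ K" using pos by (simp add: exp_of_nat_mult)
  finally show ?thesis .
qed

lemma pow_exp:
  fixes x :: real assumes "0 \<le> 1 + x" shows "(1 + x) ^ M \<le> exp (real M * x)"
proof -
  have "(1 + x) ^ M \<le> exp x ^ M" using assms exp_ge_add_one_self[of x] by (intro power_mono) auto
  also have "\<dots> = exp (real M * x)" by (simp add: exp_of_nat_mult)
  finally show ?thesis .
qed

lemma C1:
  fixes \<mu> \<delta> a1 :: real
  assumes mu: "\<mu> \<ge> 0" and d: "0 < \<delta>" "\<delta> \<le> 1" and a1: "a1 \<ge> 0" and Ma: "real M * a1 = (1-\<delta>)*\<mu>"
  shows "exp (-(\<delta>/4)*((1-\<delta>/2)*\<mu>)) * (1 + (exp (\<delta>/4) - 1)*a1)^M \<le> exp (-(\<delta>^2*\<mu>/16))"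
proof -
  have et: "exp (\<delta>/4) - 1 \<le> \<delta>/4 + (\<delta>/4)^2" using exp_bound[of "\<delta>/4"] d by simp
  have e0: "exp (\<delta>/4) - 1 \<ge> 0" using d by simp
  have "(1 + (exp (\<delta>/4) - 1)*a1)^M \<le> exp (real M * ((exp (\<delta>/4) - 1)*a1))"
    using e0 a1 by (intro pow_exp) simp
  also have "real M * ((exp (\<delta>/4) - 1)*a1) = (exp (\<delta>/4) - 1) * (real M * a1)" by (simp only: mult_ac)
  also have "\<dots> = (exp (\<delta>/4) - 1) * ((1-\<delta>)*\<mu>)" by (simp only: Ma)
  also have "\<dots> \<le> (\<delta>/4 + (\<delta>/4)^2) * ((1-\<delta>)*\<mu>)" using et mu d by (intro mult_right_mono) auto
  finally have b: "(1 + (exp (\<delta>/4) - 1)*a1)^M \<le> exp ((\<delta>/4 + (\<delta>/4)^2) * ((1-\<delta>)*\<mu>))" by simp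
  have ar: "-(\<delta>/4)*((1-\<delta>/2)*\<mu>) + (\<delta>/4 + (\<delta>/4)^2) * ((1-\<delta>)*\<mu>) = -(\<delta>^2*\<mu>/16) - \<mu>*\<delta>^3/16"
    by (simp add: field_simps power2_eq_square power3_eq_cube)
  have "exp (-(\<delta>/4)*((1-\<delta>/2)*\<mu>)) * (1 + (exp (\<delta>/4) - 1)*a1)^M
      \<le> exp (-(\<delta>/4)*((1-\<delta>/2)*\<mu>)) * exp ((\<delta>/4 + (\<delta>/4)^2) * ((1-\<delta>)*\<mu>))"
    using b by (intro mult_left_mono) auto
  also have "\<dots> = exp (-(\<delta>/4)*((1-\<delta>/2)*\<mu>) + (\<delta>/4 + (\<delta>/4)^2) * ((1-\<delta>)*\<mu>))"
    by (simp only: exp_add)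
  also have "\<dots> = exp (-(\<delta>^2*\<mu>/16) - \<mu>*\<delta>^3/16)" by (simp only: ar)
  also have "\<dots> \<le> exp (-(\<delta>^2*\<mu>/16))" using mu d by simp
  finally show ?thesis .
qed

lemma C2:
  fixes \<mu> \<delta> \<pi> :: real
  assumes d: "0 < \<delta>" "\<delta> \<le> 1" and pi: "0 \<le> \<pi>" "\<pi> \<le> 1" and mu: "\<mu> \<le> real M * \<pi>"
  shows "exp ((\<delta>/8)*((1-\<delta>/4)*(real M*\<pi>))) * (1 + (exp (-(\<delta>/8)) - 1)*\<pi>)^M \<le> exp (-(\<delta>^2*\<mu>/64))"
proof -
  have et: "exp (-(\<delta>/8)) - 1 \<le> -(\<delta>/8) + (\<delta>/8)^2" using exp_neg_bound[of "\<delta>/8"] d by simp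
  have nn: "0 \<le> 1 + (exp (-(\<delta>/8)) - 1)*\<pi>"
  proof -
    have "(1 - exp (-(\<delta>/8))) * \<pi> \<le> 1 * 1" using pi by (intro mult_mono) auto
    then show ?thesis by (simp add: algebra_simps)
  qed
  have "(1 + (exp (-(\<delta>/8)) - 1)*\<pi>)^M \<le> exp (real M * ((exp (-(\<delta>/8)) - 1)*\<pi>))"
    using nn by (rule pow_exp)
  also have "real M * ((exp (-(\<delta>/8)) - 1)*\<pi>) = (exp (-(\<delta>/8)) - 1) * (real M*\<pi>)" by simp
  also have "\<dots> \<le> (-(\<delta>/8) + (\<delta>/8)^2) * (real M*\<pi>)" using et pi by (intro mult_right_mono) auto
  finally have b: "(1 + (exp (-(\<delta>/8)) - 1)*\<pi>)^M \<le> exp ((-(\<delta>/8) + (\<delta>/8)^2) * (real M*\<pi>))" by simp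
  have ar: "(\<delta>/8)*((1-\<delta>/4)*(real M*\<pi>)) + (-(\<delta>/8) + (\<delta>/8)^2) * (real M*\<pi>) = -(\<delta>^2*(real M*\<pi>)/64)"
    by (simp add: field_simps power2_eq_square)
  have "exp ((\<delta>/8)*((1-\<delta>/4)*(real M*\<pi>))) * (1 + (exp (-(\<delta>/8)) - 1)*\<pi>)^M
      \<le> exp ((\<delta>/8)*((1-\<delta>/4)*(real M*\<pi>))) * exp ((-(\<delta>/8) + (\<delta>/8)^2) * (real M*\<pi>))"
    using b by (intro mult_left_mono) auto
  also have "\<dots> = exp ((\<delta>/8)*((1-\<delta>/4)*(real M*\<pi>)) + (-(\<delta>/8) + (\<delta>/8)^2) * (real M*\<pi>))"
    by (simp only: exp_add)
  also have "\<dots> = exp (-(\<delta>^2*(real M*\<pi>)/64))" by (simp only: ar)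
  also have "\<dots> \<le> exp (-(\<delta>^2*\<mu>/64))" using mu by (simp add: mult_left_mono)
  finally show ?thesis .
qed

lemma C3:
  fixes \<mu> \<delta> p z :: real
  assumes d: "0 < \<delta>" "\<delta> \<le> 1" and p: "0 \<le> p" "p \<le> 1" and z: "z \<ge> 0" and mu: "\<mu> = p * z / (1-\<delta>/4)"
  shows "(\<delta>/8)*((1-\<delta>/2)*\<mu>) + z * ln (1 - p + p * exp (-(\<delta>/8))) \<le> -(\<delta>^2*\<mu>/64)"
proof -
  have et: "exp (-(\<delta>/8)) - 1 \<le> -(\<delta>/8) + (\<delta>/8)^2" using exp_neg_bound[of "\<delta>/8"] d by simp
  have pos: "0 < 1 - p + p * exp (-(\<delta>/8))"
  proof (cases "p = 1")
    case False
    then have "1 - p > 0" using p by simp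
    moreover have "p * exp (-(\<delta>/8)) \<ge> 0" using p by simp
    ultimately show ?thesis by linarith
  qed simp
  have "ln (1 - p + p * exp (-(\<delta>/8))) \<le> (1 - p + p * exp (-(\<delta>/8))) - 1" using pos by (rule ln_le_minus_one)
  also have "\<dots> = p * (exp (-(\<delta>/8)) - 1)" by (simp add: algebra_simps)
  also have "\<dots> \<le> p * (-(\<delta>/8) + (\<delta>/8)^2)" using et p by (intro mult_left_mono) auto
  finally have l: "z * ln (1 - p + p * exp (-(\<delta>/8))) \<le> z * (p * (-(\<delta>/8) + (\<delta>/8)^2))" using z by (intro mult_left_mono)
  have pz: "p * z = (1-\<delta>/4) * \<mu>" using mu d by simp
  have mu0: "\<mu> \<ge> 0" using mu d p z by simp
  have "(\<delta>/8)*((1-\<delta>/2)*\<mu>) + z * (p * (-(\<delta>/8) + (\<delta>/8)^2))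
      = (\<delta>/8)*((1-\<delta>/2)*\<mu>) + ((1-\<delta>/4) * \<mu>) * (-(\<delta>/8) + (\<delta>/8)^2)"
    using pz by (simp add: mult.assoc[symmetric] mult.commute[of z p])
  also have "\<dots> = -(\<delta>^2*\<mu>/64) - \<mu>*\<delta>^3/256" by (simp add: field_simps power2_eq_square power3_eq_cube)
  also have "\<dots> \<le> -(\<delta>^2*\<mu>/64)" using mu0 d by simp
  finally show ?thesis using l by linarith
qed

lemma N1:
  fixes c :: real assumes K: "K \<ge> 2" and c: "c \<ge> 0"
  shows "real K * exp (-(3*(1+c))*ln (real K)) + exp (-(3*(1+c))*ln (real K)) \<le> exp (-c*ln (real K))/2"
proof -
  define y where "y = ln (real K)"
  have Kp: "real K > 0" using K by simp
  have Ky: "real K = exp y" unfolding y_def using Kp by simp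
  have y0: "y \<ge> 0" unfolding y_def using K by simp
  have s1: "real K * exp (-(3*(1+c))*y) + exp (-(3*(1+c))*y) \<le> 2 * (real K * exp (-(3*(1+c))*y))"
    using K by simp
  have s2: "real K * exp (-(3*(1+c))*y) = exp (-c*y) * exp (-(2*(1+c))*y)"
    unfolding Ky by (simp add: exp_add[symmetric] algebra_simps)
  have "exp (-(2*(1+c))*y) \<le> exp (-2*y)" using y0 c mult_nonneg_nonneg[of c y] by (simp add: algebra_simps)
  then have s3: "exp (-c*y) * exp (-(2*(1+c))*y) \<le> exp (-c*y) * exp (-2*y)" by simp
  have s4: "exp (-2*y) = 1 / real K ^ 2" unfolding Ky by (simp add: exp_minus power2_eq_square exp_add[symmetric] field_simps)
  have "1 / real K ^ 2 \<le> 1/4"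
  proof -
    have "(2::real)^2 \<le> real K ^ 2" using K by (intro power_mono) auto
    moreover have "real K ^ 2 > 0" using K by simp
    ultimately show ?thesis by (simp add: divide_le_eq)
  qed
  then have s5: "exp (-c*y) * (1 / real K ^ 2) \<le> exp (-c*y) * (1/4)"
    by (intro mult_left_mono) auto
  have s3': "exp (-c*y) * exp (-(2*(1+c))*y) \<le> exp (-c*y) * (1 / real K ^ 2)" using s3 unfolding s4 .
  from s1 s2 s3' s5 show ?thesis unfolding y_def[symmetric] by linarith
qed

lemma N2:
  fixes c B C :: real assumes B: "B \<ge> 2" and C: "0 \<le> C" "C \<le> B" and c: "c \<ge> 0"
  shows "C * exp (-(2*(1+c))*ln B) \<le> exp (-c*ln B)/2"
proof -
  define y where "y = ln B"
  have By: "B = exp y" unfolding y_def using B by simp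
  have y0: "y \<ge> 0" unfolding y_def using B by simp
  have "C * exp (-(2*(1+c))*y) \<le> B * exp (-(2*(1+c))*y)" using C by (intro mult_right_mono) auto
  also have "B * exp (-(2*(1+c))*y) = exp (-c*y) * exp (-(1+c)*y)"
    unfolding By by (simp add: exp_add[symmetric] algebra_simps)
  also have "exp (-(1+c)*y) \<le> exp (-y)" using y0 c mult_nonneg_nonneg[of c y] by (simp add: algebra_simps)
  then have "exp (-c*y) * exp (-(1+c)*y) \<le> exp (-c*y) * exp (-y)" by simp
  also have "exp (-y) = 1 / B" unfolding By by (simp add: exp_minus divide_inverse)
  also have "exp (-c*y) * (1 / B) \<le> exp (-c*y) * (1/2)" using B by (intro mult_left_mono) (auto simp: field_simps)
  finally show ?thesis unfolding y_def by simp
qed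

lemma alg1:
  fixes c X k a b d Kr :: real
  assumes nz: "a \<noteq> 0" "b \<noteq> 0" "Kr \<noteq> 0" "d \<noteq> 0"
  shows "d^2 * (((1 + c) * (Kr * b / (a * d^2)) * X) * (k * a / (b * Kr))) = (1 + c) * k * X"
  using nz by (simp add: field_simps power2_eq_square)

lemma core:
  fixes c0 u q :: real and N K L M :: nat and Sd :: "nat set"
  assumes c0: "c0 > 0" and SdN: "Sd \<subseteq> {0..<N}" and cK: "card Sd = K" and K1: "K > 1"
    and L1: "1 \<le> L" and LN: "L \<le> N - K" and u0: "0 \<le> u" and u1: "u < 1/2" and q0: "0 \<le> q" and q1: "q < 1/2"
    and Mge: "real M \<ge> (1 + c0) * (real K * (1 - u) / ((1 - q) * (1 - u / (1 - (1 - u) * (1 / ((1 - u) * real K))))^2)) *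
                 (128 * exp 2 * ln (real K * real ((N - K) choose (L - 1))) / (real (N - K) - real (L - 1)) + 192 * exp 2 * ln (real K))"
  shows "measure_pmf.prob (gt_pmf M N (1 / ((1 - u) * real K)) u q) {\<omega>. rolpal_success M N L Sd \<omega>}
          > 1 - exp (- c0 * ln (real K * real ((N - K) choose (L - 1)))) - exp (- c0 * ln (real K))"
proof -
  define p where "p = 1 / ((1 - u) * real K)"
  define \<kappa> where "\<kappa> = 1 - 1 / real K"
  have K2: "K \<ge> 2" using K1 by simp
  have Kr: "real K \<ge> 2" using K2 by simp
  have up: "1 - u > 1/2" using u1 by simp
  have pu: "p * (1 - u) = 1 / real K" unfolding p_def using up Kr by (simp add: field_simps)
  have pu': "(1 - u) * p = 1 / real K" using pu by (simp add: mult.commute)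
  have p0: "0 \<le> p" unfolding p_def using up Kr by simp
  have p1: "p \<le> 1"
  proof -
    have "(1 - u) * real K \<ge> 1/2 * 2" using up Kr by (intro mult_mono) auto
    then show ?thesis unfolding p_def by (simp add: divide_le_eq)
  qed
  have kap: "\<kappa> \<ge> 1/2" "\<kappa> < 1" unfolding \<kappa>_def using Kr by (auto simp: field_simps)
  have kappos: "\<kappa> > 0" using kap by simp
  have gam: "u / (1 - (1 - u) * (1 / ((1 - u) * real K))) = u / \<kappa>"
    using pu' unfolding p_def \<kappa>_def by simp
  define \<delta> where "\<delta> = 1 - u / \<kappa>"
  have ug: "u / \<kappa> \<le> 2 * u"
  proof -
    have "u \<le> 2 * u * \<kappa>" using kap u0 mult_left_mono[OF kap(1), of "2*u"] by simp
    then show ?thesis using kappos by (simp add: divide_le_eq)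
  qed
  have d0: "0 < \<delta>" unfolding \<delta>_def using ug u1 by simp
  have d1: "\<delta> \<le> 1" unfolding \<delta>_def using u0 kappos by simp
  define \<pi> where "\<pi> = \<kappa> ^ K * (1 - q)"
  have kpK: "1 - p * (1 - u) = \<kappa>" unfolding \<kappa>_def using pu by simp
  have pi0: "0 \<le> \<pi>" and pi1: "\<pi> \<le> 1"
  proof -
    have "\<kappa> ^ K \<le> 1" using kap kappos by (simp add: power_le_one)
    moreover have "\<kappa> ^ K \<ge> 0" using kappos by simp
    ultimately show "0 \<le> \<pi>" "\<pi> \<le> 1" unfolding \<pi>_def using q0 q1 by (auto intro: mult_le_one)
  qed
  define \<mu> where "\<mu> = real M * (p * \<pi>)"
  define \<tau> where "\<tau> = (1 - \<delta>/2) * \<mu>"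
  define z0 where "z0 = (1 - \<delta>/4) * (real M * \<pi>)"
  define n where "n = N - K"
  define m where "m = n - (L - 1)"
  define C where "C = n choose (L - 1)"
  define B where "B = real K * real C"
  have Lle: "L - 1 \<le> n" unfolding n_def using LN L1 by simp
  have mr: "real m = real (N - K) - real (L - 1)" unfolding m_def n_def using Lle n_def by (simp add: of_nat_diff)
  have m1: "m \<ge> 1" unfolding m_def using LN L1 n_def by simp
  have Cge1: "C \<ge> 1" unfolding C_def using Lle by (simp add: Suc_leI)
  have Cm: "C = n choose m" unfolding C_def m_def by (rule binomial_symmetric[OF Lle])
  have B2: "B \<ge> 2"
  proof -
    have "real C \<ge> 1" using Cge1 by simp
    then have "real K * real C \<ge> 2 * 1" using Kr by (intro mult_mono) auto
    then show ?thesis unfolding B_def by simp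
  qed
  have CB: "real C \<le> B"
  proof -
    have "1 * real C \<le> real K * real C" using Kr by (intro mult_right_mono) auto
    then show ?thesis unfolding B_def by simp
  qed
  define X where "X = 128 * exp 2 * ln B / real m + 192 * exp 2 * ln (real K)"
  have lnB0: "ln B \<ge> 0" using B2 by simp
  have lnK0: "ln (real K) \<ge> 0" using Kr by simp
  have Xa: "X \<ge> 128 * exp 2 * ln B / real m" unfolding X_def using lnK0 by simp
  have Xb: "X \<ge> 192 * exp 2 * ln (real K)" unfolding X_def using lnB0 m1 by simp
  have "192 * exp 2 * ln (real K) \<ge> 0" using lnK0 by simp
  then have X0: "X \<ge> 0" using Xb by linarith
  have Mge': "real M \<ge> (1 + c0) * (real K * (1 - u) / ((1 - q) * \<delta>^2)) * X"
    using Mge[unfolded gam mr[symmetric]] unfolding X_def B_def C_def n_def \<delta>_def .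
  have kK: "\<kappa> ^ K \<ge> exp (-2)" unfolding \<kappa>_def by (rule kappa_bound[OF K2])
  have mud: "\<delta>^2 * \<mu> \<ge> (1 + c0) * exp (-2) * X"
  proof -
    define F where "F = \<kappa> ^ K * (1 - q) / ((1 - u) * real K)"
    have F0: "F \<ge> 0" unfolding F_def using kappos q1 up Kr by simp
    have muF: "\<mu> = real M * F" unfolding \<mu>_def F_def \<pi>_def p_def by simp
    have "\<delta>^2 * \<mu> \<ge> \<delta>^2 * (((1 + c0) * (real K * (1 - u) / ((1 - q) * \<delta>^2)) * X) * F)"
      unfolding muF using Mge' F0 by (intro mult_left_mono mult_right_mono) auto
    also have "\<delta>^2 * (((1 + c0) * (real K * (1 - u) / ((1 - q) * \<delta>^2)) * X) * F) = (1 + c0) * \<kappa> ^ K * X"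
    proof -
      have nz: "1 - q \<noteq> 0" "1 - u \<noteq> 0" "real K \<noteq> 0" "\<delta> \<noteq> 0" using d0 q1 up Kr by auto
      show ?thesis unfolding F_def
        using alg1[where a="1-q" and b="1-u" and Kr="real K" and d=\<delta> and c=c0 and k="\<kappa>^K" and X=X, OF nz] by simp
    qed
    also have "(1 + c0) * \<kappa> ^ K * X \<ge> (1 + c0) * exp (-2) * X"
      using kK X0 c0 by (intro mult_right_mono mult_left_mono) auto
    finally show ?thesis .
  qed
  have h1: "real m * (\<delta>^2 * \<mu> / 64) \<ge> 2 * (1 + c0) * ln B"
  proof -
    have "real m * (\<delta>^2 * \<mu>) \<ge> real m * ((1 + c0) * exp (-2) * (128 * exp 2 * ln B / real m))"
      using mud Xa c0 by (intro mult_left_mono order_trans[OF _ mud]) auto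
    also have "real m * ((1 + c0) * exp (-2) * (128 * exp 2 * ln B / real m)) = 128 * (1 + c0) * ln B"
      using m1 by (simp add: field_simps exp_minus)
    finally show ?thesis by (simp add: algebra_simps)
  qed
  have h2: "\<delta>^2 * \<mu> / 64 \<ge> 3 * (1 + c0) * ln (real K)"
  proof -
    have "\<delta>^2 * \<mu> \<ge> (1 + c0) * exp (-2) * (192 * exp 2 * ln (real K))"
      using mud Xb c0 by (intro order_trans[OF _ mud] mult_left_mono) auto
    also have "(1 + c0) * exp (-2) * (192 * exp 2 * ln (real K)) = 192 * (1 + c0) * ln (real K)"
      by (simp add: field_simps exp_minus)
    finally show ?thesis by (simp add: algebra_simps)
  qed
  have mu0: "\<mu> \<ge> 0" unfolding \<mu>_def using p0 pi0 by simp
  interpret params N p u q Sd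
    using p0 p1 u0 u1 q0 q1 SdN by unfold_locales auto
  let ?P = "gt_pmf M N p u q"
  define A1 where "A1 = (\<lambda>d. {\<omega>. \<tau> \<le> ccount (fst \<omega>) (zero_tests M Sd \<omega>) d})"
  define A2 where "A2 = {\<omega>. real (card (zero_tests M Sd \<omega>)) < z0}"
  define ND where "ND = {0..<N} - Sd"
  define Subs where "Subs = {S. S \<subseteq> ND \<and> card S = m}"
  define A3 where "A3 = (\<lambda>S. {\<omega>. z0 \<le> real (card (zero_tests M Sd \<omega>)) \<and> (\<forall>k\<in>S. ccount (fst \<omega>) (zero_tests M Sd \<omega>) k < \<tau>)})"
  have finSd: "finite Sd" using SdN finite_subset by blast
  have cND: "card ND = n" unfolding ND_def n_def using SdN cK by (simp add: card_Diff_subset finSd)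
  have finSubs: "finite Subs" unfolding Subs_def ND_def by (rule finite_subset[of _ "Pow ({0..<N})"]) auto
  have cSubs: "card Subs = C" unfolding Subs_def Cm using cND by (simp add: n_subsets ND_def)
  have b1: "measure_pmf.prob ?P (A1 d) \<le> exp (-(\<delta>^2*\<mu>/16))" if d: "d \<in> Sd" for d
  proof -
    have "measure_pmf.prob ?P (A1 d) \<le> exp (-(\<delta>/4)*\<tau>) * (1 + (exp (\<delta>/4) - 1)*(p*u*(1-p*(1-u))^(card Sd - 1)*(1-q))) ^ M"
      unfolding A1_def by (rule bnd1[OF d]) (use d0 in simp)
    also have "\<dots> \<le> exp (-(\<delta>^2*\<mu>/16))"
      unfolding \<tau>_def
    proof (rule C1[OF mu0 d0 d1])
      show "0 \<le> p*u*(1-p*(1-u))^(card Sd - 1)*(1-q)" using p0 u0 q1 kpK kappos by simp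
      have "\<kappa> ^ K = \<kappa> * \<kappa> ^ (K - 1)" using K2 by (cases K) simp_all
      then show "real M * (p*u*(1-p*(1-u))^(card Sd - 1)*(1-q)) = (1-\<delta>)*\<mu>"
        unfolding kpK cK \<delta>_def \<mu>_def \<pi>_def using kappos by (simp add: field_simps)
    qed
    finally show ?thesis .
  qed
  have b2: "measure_pmf.prob ?P A2 \<le> exp (-(\<delta>^2*\<mu>/64))"
  proof -
    have "measure_pmf.prob ?P A2 \<le> exp ((\<delta>/8)*z0) * (1 + (exp (-(\<delta>/8)) - 1)*((1-p*(1-u))^(card Sd)*(1-q))) ^ M"
      unfolding A2_def by (rule bnd2) (use d0 in simp)
    also have "\<dots> \<le> exp (-(\<delta>^2*\<mu>/64))"
      unfolding z0_def kpK cK \<pi>_def[symmetric]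
    proof (rule C2[OF d0 d1 pi0 pi1])
      have "p * \<pi> \<le> 1 * \<pi>" using p1 pi0 by (intro mult_right_mono) auto
      then have "real M * (p * \<pi>) \<le> real M * (1 * \<pi>)" by (intro mult_left_mono) auto
      then show "\<mu> \<le> real M * \<pi>" unfolding \<mu>_def by simp
    qed
    finally show ?thesis .
  qed
  have b3: "measure_pmf.prob ?P (A3 S) \<le> exp (-(real m * (\<delta>^2*\<mu>/64)))" if S: "S \<in> Subs" for S
  proof -
    have SS: "S \<subseteq> {0..<N}" "S \<inter> Sd = {}" and cS: "card S = m" using S unfolding Subs_def ND_def by auto
    have "measure_pmf.prob ?P (A3 S) \<le> exp (real (card S) * ((\<delta>/8)*\<tau> + z0 * ln (1 - p + p * exp (-(\<delta>/8)))))"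
      unfolding A3_def by (rule bnd3[OF SS]) (use d0 in simp)
    also have "\<dots> \<le> exp (real (card S) * (-(\<delta>^2*\<mu>/64)))"
    proof -
      have z00: "z0 \<ge> 0" unfolding z0_def using d1 pi0 by simp
      have ineq: "(\<delta>/8)*\<tau> + z0 * ln (1 - p + p * exp (-(\<delta>/8))) \<le> -(\<delta>^2*\<mu>/64)"
        unfolding \<tau>_def by (rule C3[OF d0 d1 p0 p1 z00]) (use d1 in \<open>simp add: \<mu>_def z0_def field_simps\<close>)
      show ?thesis using mult_left_mono[OF ineq, of "real (card S)"] by simp
    qed
    finally show ?thesis using cS by simp
  qed
  have cover: "{\<omega>. \<not> rolpal_success M N L Sd \<omega>} \<subseteq> (\<Union>d\<in>Sd. A1 d) \<union> A2 \<union> (\<Union>S\<in>Subs. A3 S)"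
  proof
    fix \<omega> assume F: "\<omega> \<in> {\<omega>. \<not> rolpal_success M N L Sd \<omega>}"
    show "\<omega> \<in> (\<Union>d\<in>Sd. A1 d) \<union> A2 \<union> (\<Union>S\<in>Subs. A3 S)"
    proof (rule ccontr)
      assume nin: "\<omega> \<notin> (\<Union>d\<in>Sd. A1 d) \<union> A2 \<union> (\<Union>S\<in>Subs. A3 S)"
      define cc where "cc = ccount (fst \<omega>) (zero_tests M Sd \<omega>)"
      have dl: "\<forall>d\<in>Sd. cc d < \<tau>" using nin unfolding A1_def cc_def by auto
      have mz: "z0 \<le> real (card (zero_tests M Sd \<omega>))" using nin unfolding A2_def by auto
      define G where "G = {k\<in>{0..<N}. k \<notin> Sd \<and> \<tau> \<le> cc k}"
      define Low where "Low = {k\<in>{0..<N}. k \<notin> Sd \<and> cc k < \<tau>}"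
      have GL: "L \<le> card G"
      proof (rule ccontr)
        assume "\<not> L \<le> card G"
        then have cG: "card G \<le> L - 1" by simp
        have "ND = G \<union> Low" "G \<inter> Low = {}" unfolding ND_def G_def Low_def by auto
        then have "card ND = card G + card Low" unfolding ND_def by (simp add: card_Un_disjoint G_def Low_def)
        then have "m \<le> card Low" using cG cND unfolding m_def by simp
        then obtain S where S: "S \<subseteq> Low" "card S = m" by (meson obtain_subset_with_card_n)
        have "S \<in> Subs" unfolding Subs_def using S unfolding Low_def ND_def by auto
        moreover have "\<omega> \<in> A3 S" unfolding A3_def using mz S unfolding Low_def cc_def by auto
        ultimately show False using nin by auto
      qed
      have "rolpal_success M N L Sd \<omega>"
        unfolding rolpal_success_def
      proof (intro allI impI)
        fix z eta T assume opt: "lp0_optimal N L (fst \<omega>) (zero_tests M Sd \<omega>) z eta" and top: "top_L N L z T"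
        show "T \<inter> Sd = {}"
          by (rule lp_success[OF SdN _ _ opt top, of \<tau>]) (use dl GL in \<open>auto simp: cc_def G_def\<close>)
      qed
      then show False using F by simp
    qed
  qed
  have "measure_pmf.prob ?P {\<omega>. \<not> rolpal_success M N L Sd \<omega>}
      \<le> measure_pmf.prob ?P ((\<Union>d\<in>Sd. A1 d) \<union> A2 \<union> (\<Union>S\<in>Subs. A3 S))"
    using cover by (intro measure_pmf.finite_measure_mono) auto
  also have "\<dots> \<le> measure_pmf.prob ?P ((\<Union>d\<in>Sd. A1 d) \<union> A2) + measure_pmf.prob ?P (\<Union>S\<in>Subs. A3 S)"
    by (rule measure_Un_le) auto
  also have "measure_pmf.prob ?P ((\<Union>d\<in>Sd. A1 d) \<union> A2) \<le> measure_pmf.prob ?P (\<Union>d\<in>Sd. A1 d) + measure_pmf.prob ?P A2"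
    by (rule measure_Un_le) auto
  also have "measure_pmf.prob ?P (\<Union>d\<in>Sd. A1 d) \<le> (\<Sum>d\<in>Sd. measure_pmf.prob ?P (A1 d))"
    using finSd by (intro measure_pmf.finite_measure_subadditive_finite) auto
  also have "(\<Sum>d\<in>Sd. measure_pmf.prob ?P (A1 d)) \<le> (\<Sum>d\<in>Sd. exp (-(\<delta>^2*\<mu>/16)))"
    using b1 by (intro sum_mono) auto
  also have "measure_pmf.prob ?P (\<Union>S\<in>Subs. A3 S) \<le> (\<Sum>S\<in>Subs. measure_pmf.prob ?P (A3 S))"
    using finSubs by (intro measure_pmf.finite_measure_subadditive_finite) auto
  also have "(\<Sum>S\<in>Subs. measure_pmf.prob ?P (A3 S)) \<le> (\<Sum>S\<in>Subs. exp (-(real m * (\<delta>^2*\<mu>/64))))"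
    using b3 by (intro sum_mono) auto
  finally have fail: "measure_pmf.prob ?P {\<omega>. \<not> rolpal_success M N L Sd \<omega>}
      \<le> real K * exp (-(\<delta>^2*\<mu>/16)) + exp (-(\<delta>^2*\<mu>/64)) + real C * exp (-(real m * (\<delta>^2*\<mu>/64)))"
    using b2 cK cSubs by simp
  have dmu0: "\<delta>^2 * \<mu> \<ge> 0" using mu0 by simp
  have r1: "-(3*(1+c0))*ln (real K) = -(3*(1+c0)*ln (real K))" by (simp only: mult_minus_left)
  have r2: "-(2*(1+c0))*ln B = -(2*(1+c0)*ln B)" by (simp only: mult_minus_left)
  have e1: "exp (-(\<delta>^2*\<mu>/16)) \<le> exp (-(3*(1+c0))*ln (real K))"
    unfolding exp_le_cancel_iff r1 using h2 dmu0 by linarith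
  have e2: "exp (-(\<delta>^2*\<mu>/64)) \<le> exp (-(3*(1+c0))*ln (real K))"
    unfolding exp_le_cancel_iff r1 using h2 by linarith
  have e3: "exp (-(real m * (\<delta>^2*\<mu>/64))) \<le> exp (-(2*(1+c0))*ln B)"
    unfolding exp_le_cancel_iff r2 using h1 by linarith
  have "real K * exp (-(\<delta>^2*\<mu>/16)) + exp (-(\<delta>^2*\<mu>/64)) \<le> real K * exp (-(3*(1+c0))*ln (real K)) + exp (-(3*(1+c0))*ln (real K))"
    using e1 e2 Kr by (intro add_mono mult_left_mono) auto
  also have "\<dots> \<le> exp (-c0*ln (real K))/2" by (rule N1[OF K2]) (use c0 in simp)
  finally have t1: "real K * exp (-(\<delta>^2*\<mu>/16)) + exp (-(\<delta>^2*\<mu>/64)) \<le> exp (-c0*ln (real K))/2" .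
  have "real C * exp (-(real m * (\<delta>^2*\<mu>/64))) \<le> real C * exp (-(2*(1+c0))*ln B)"
    using e3 by (intro mult_left_mono) auto
  also have "\<dots> \<le> exp (-c0*ln B)/2" by (rule N2[OF B2 _ CB]) (use c0 in simp_all)
  finally have t2: "real C * exp (-(real m * (\<delta>^2*\<mu>/64))) \<le> exp (-c0*ln B)/2" .
  have pos1: "exp (-c0*ln (real K)) > 0" "exp (-c0*ln B) > 0" by simp_all
  have failb: "measure_pmf.prob ?P {\<omega>. \<not> rolpal_success M N L Sd \<omega>} < exp (-c0*ln B) + exp (-c0*ln (real K))"
    using fail t1 t2 pos1 by linarith
  have compl: "measure_pmf.prob ?P {\<omega>. rolpal_success M N L Sd \<omega>} = 1 - measure_pmf.prob ?P {\<omega>. \<not> rolpal_success M N L Sd \<omega>}"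
  proof -
    have c1: "measure_pmf.prob ?P (space (measure_pmf ?P) - {\<omega>. \<not> rolpal_success M N L Sd \<omega>}) = 1 - measure_pmf.prob ?P {\<omega>. \<not> rolpal_success M N L Sd \<omega>}"
      by (rule measure_pmf.prob_compl) simp
    have c2: "{\<omega>. rolpal_success M N L Sd \<omega>} = space (measure_pmf ?P) - {\<omega>. \<not> rolpal_success M N L Sd \<omega>}" by auto
    show ?thesis unfolding c2 by (rule c1)
  qed
  show ?thesis using compl failb unfolding p_def[symmetric] B_def C_def n_def by simp
qed

theorem theorem2:
  fixes c0 :: real
  assumes "c0 > 0"
  shows "\<exists>Ca1 Ca2 :: real. Ca1 > 0 \<and> Ca2 > 0 \<and>
    (\<forall>(N::nat) (K::nat) (L::nat) (M::nat) (Sd::nat set) (u::real) (q::real).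
       Sd \<subseteq> {0..<N} \<longrightarrow> card Sd = K \<longrightarrow> K > 1 \<longrightarrow> 1 \<le> L \<longrightarrow> L \<le> N - K \<longrightarrow>
       0 \<le> u \<longrightarrow> u < 1/2 \<longrightarrow> 0 \<le> q \<longrightarrow> q < 1/2 \<longrightarrow>
       (let p = 1 / ((1 - u) * real K);
            \<gamma>0 = u / (1 - (1 - u) * p);
            B = real K * real ((N - K) choose (L - 1))
        in real M \<ge> (1 + c0) * (real K * (1 - u) / ((1 - q) * (1 - \<gamma>0)^2)) *
                 (Ca1 * ln B / (real (N - K) - real (L - 1)) + Ca2 * ln (real K))
           \<longrightarrow> measure_pmf.prob (gt_pmf M N p u q) {\<omega>. rolpal_success M N L Sd \<omega>}
                 > 1 - exp (- c0 * ln B) - exp (- c0 * ln (real K))))"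
    apply (rule exI[of _ "128 * exp 2"])
  apply (rule exI[of _ "192 * exp 2"])
  apply (intro conjI allI impI)
    apply simp
   apply simp
  apply (unfold Let_def)
  apply (intro impI)
  apply (rule core)
               apply (simp_all add: assms)
  done

end
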